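(* Let $f\in\mathcal{P}_n$ be continuous and compactly supported. For $\alpha>0$ let $s_\alpha=\sinh^{-1}(1/\alpha)$. Then $$|I(f)|=\lim_{\alpha\to0}(2s_\alpha)^{-n}|I^\alpha(f)|.$$
   Context: $\mathcal{P}_n$ is the set of measurable $f:\mathbb{R}^n\to[0,\infty)$ with $\int f=1$ and $\|f\|_\infty<\infty$. Star-shaped sets are given by radial functions on $S^{n-1}$, with volume $|K|=\omega_n\int_{S^{n-1}}\rho(K,u)^nd\sigma(u)$ ($\sigma$ normalized surface measure, $\omega_n=|B_2^n|$). $I(f)$ is the star-shaped set with $\rho(I(f),u)=\int_{u^\perp}f(x)\,dx$ (Lebesgue measure on the hyperplane $u^\perp$). For $\alpha>0$, $I^\alpha(f)$ is the star-shaped set with $\rho(I^\alpha(f),u)=\int_{\mathbb{R}^n}\big(\langle x,u\rangle^2+\alpha^2\|u\|_2^2\big)^{-1/2}f(x)\,dx$. *)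

theory Defs
  imports "HOL-Analysis.Analysis"
begin

definition star_body :: "('a::euclidean_space \<Rightarrow> real) \<Rightarrow> 'a set" where
  "star_body \<rho> = {x. x = 0 \<or> norm x \<le> \<rho> (x /\<^sub>R norm x)}"

text \<open>Volume of the star-shaped set: its Lebesgue measure
  (equal to omega_n times the sigma-integral of rho to the n by polar coordinates).\<close>
definition star_volume :: "('a::euclidean_space \<Rightarrow> real) \<Rightarrow> real" where
  "star_volume \<rho> = measure lebesgue (star_body \<rho>)"

text \<open>Integral of f over the hyperplane orthogonal to the unit vector u, w.r.t.
  (n-1)-dimensional Lebesgue measure on it. By Fubini this equals the integral of
  f(x - <x,u>u) over the slab 0 <= <x,u> <= 1 of width one.\<close>
definition hyperplane_integral :: "('a::euclidean_space \<Rightarrow> real) \<Rightarrow> 'a \<Rightarrow> real" where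
  "hyperplane_integral f u =
     (LINT x : {x. 0 \<le> x \<bullet> u \<and> x \<bullet> u \<le> 1} | lebesgue. f (x - (x \<bullet> u) *\<^sub>R u))"

definition rho_I :: "('a::euclidean_space \<Rightarrow> real) \<Rightarrow> 'a \<Rightarrow> real" where
  "rho_I f u = hyperplane_integral f u"

definition rho_I_alpha :: "real \<Rightarrow> ('a::euclidean_space \<Rightarrow> real) \<Rightarrow> 'a \<Rightarrow> real" where
  "rho_I_alpha \<alpha> f u =
     (LINT x | lebesgue. f x / sqrt ((x \<bullet> u)\<^sup>2 + \<alpha>\<^sup>2 * (norm u)\<^sup>2))"

definition P_class :: "('a::euclidean_space \<Rightarrow> real) set" where
  "P_class = {f. f \<in> borel_measurable lebesgue \<and> (\<forall>x. 0 \<le> f x)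
                 \<and> integrable lebesgue f \<and> integral\<^sup>L lebesgue f = 1 \<and> bounded (range f)}"

end

theory Submission
  imports Defs
begin

lemma slab_shift:
  fixes u :: "'a::euclidean_space" and G :: "'a \<Rightarrow> real"
  assumes u: "norm u = 1" and G[measurable]: "G \<in> borel_measurable borel"
    and inv: "\<And>x t. G (x + t *\<^sub>R u) = G x"
    and A[measurable]: "A \<in> sets borel"
  shows "(\<integral>\<^sup>+x. ennreal (G x) * indicator ((+) c ` A) (x \<bullet> u) \<partial>lborel)
       = (\<integral>\<^sup>+x. ennreal (G x) * indicator A (x \<bullet> u) \<partial>lborel)"
proof -
  have uu: "u \<bullet> u = 1" using u by (simp add: norm_eq_1)
  have "(\<integral>\<^sup>+x. ennreal (G x) * indicator ((+) c ` A) (x \<bullet> u) \<partial>lborel)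
      = (\<integral>\<^sup>+x. ennreal (G x) * indicator ((+) c ` A) (x \<bullet> u) \<partial>(distr lborel borel ((+) (c *\<^sub>R u))))"
    by (simp add: lborel_distr_plus)
  also have "\<dots> = (\<integral>\<^sup>+x. ennreal (G (c *\<^sub>R u + x)) * indicator ((+) c ` A) ((c *\<^sub>R u + x) \<bullet> u) \<partial>lborel)"
  proof (rule nn_integral_distr)
    show "(+) (c *\<^sub>R u) \<in> lborel \<rightarrow>\<^sub>M borel" by simp
    have "(+) c ` A = (\<lambda>t. t - c) -` A" by (force simp: image_iff)
    then show "(\<lambda>x. ennreal (G x) * indicator ((+) c ` A) (x \<bullet> u)) \<in> borel_measurable (distr lborel borel ((+) (c *\<^sub>R u)))"
      by simp
  qed
  also have "\<dots> = (\<integral>\<^sup>+x. ennreal (G x) * indicator A (x \<bullet> u) \<partial>lborel)"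
  proof (rule nn_integral_cong)
    fix x :: 'a
    have "G (c *\<^sub>R u + x) = G x" using inv[of x c] by (simp add: add.commute)
    moreover have "(c *\<^sub>R u + x) \<bullet> u = c + x \<bullet> u" by (simp add: inner_add_left uu)
    moreover have "indicator ((+) c ` A) (c + x \<bullet> u) = (indicator A (x \<bullet> u) :: ennreal)"
      by (simp add: indicator_def image_iff)
    ultimately show "ennreal (G (c *\<^sub>R u + x)) * indicator ((+) c ` A) ((c *\<^sub>R u + x) \<bullet> u) = ennreal (G x) * indicator A (x \<bullet> u)"
      by simp
  qed
  finally show ?thesis .
qed

lemma transl_inv_measure:
  fixes \<nu> :: "real measure"
  assumes sets: "sets \<nu> = sets borel"
    and shift: "\<And>a b. a \<le> b \<Longrightarrow> emeasure \<nu> {a..<b} = emeasure \<nu> {0..<b-a}"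
    and fin: "emeasure \<nu> {0..<1} < \<infinity>"
  shows "\<nu> = density lborel (\<lambda>_. emeasure \<nu> {0..<1})"
proof -
  define \<psi> where "\<psi> t = emeasure \<nu> {0..<t}" for t
  have [simp]: "A \<in> sets borel \<Longrightarrow> A \<in> sets \<nu>" for A using sets by simp
  have add: "\<psi> (s + t) = \<psi> s + \<psi> t" if "0 \<le> s" "0 \<le> t" for s t
  proof -
    have "{0..<s+t} = {0..<s} \<union> {s..<s+t}" using that by auto
    then have "\<psi> (s + t) = emeasure \<nu> {0..<s} + emeasure \<nu> {s..<s+t}"
      unfolding \<psi>_def by (simp add: plus_emeasure disjoint_iff)
    also have "emeasure \<nu> {s..<s+t} = \<psi> t" using shift[of s "s+t"] that by (simp add: \<psi>_def)
    finally show ?thesis by (simp add: \<psi>_def)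
  qed
  have mult: "\<psi> (real k * t) = of_nat k * \<psi> t" if "0 \<le> t" for k t
  proof (induction k)
    case 0 then show ?case by (simp add: \<psi>_def)
  next
    case (Suc k)
    have "\<psi> (real (Suc k) * t) = \<psi> (real k * t + t)" by (simp add: algebra_simps)
    also have "\<dots> = \<psi> (real k * t) + \<psi> t" using that by (intro add) auto
    finally show ?case using Suc by (simp add: algebra_simps)
  qed
  have mono: "\<psi> s \<le> \<psi> t" if "s \<le> t" for s t
    unfolding \<psi>_def using that by (intro emeasure_mono) auto
  obtain P where P: "\<psi> 1 = ennreal P" "0 \<le> P"
    using fin unfolding \<psi>_def by (cases "emeasure \<nu> {0..<1}" rule: ennreal_cases) auto
  have inv: "\<psi> (1 / real N) = ennreal (P / real N)" if "N > 0" for N :: nat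
  proof -
    have "\<psi> (1 / real N) \<le> \<psi> 1" using that by (intro mono) auto
    then obtain q where q: "\<psi> (1 / real N) = ennreal q" "0 \<le> q"
      using P by (cases "\<psi> (1 / real N)" rule: ennreal_cases) (auto simp: top_unique)
    have "\<psi> (real N * (1 / real N)) = of_nat N * \<psi> (1 / real N)" by (rule mult) auto
    then have "ennreal P = ennreal (real N * q)" using that P q
      by (simp add: ennreal_of_nat_eq_real_of_nat ennreal_mult)
    then have "P = real N * q" using q P by (simp add: ennreal_inj)
    then show ?thesis using q that by simp
  qed
  have mN: "\<psi> (real m / real N) = ennreal (real m * P / real N)" if "N > 0" for m N :: nat
  proof -
    have "\<psi> (real m / real N) = \<psi> (real m * (1 / real N))" by simp
    also have "\<dots> = of_nat m * \<psi> (1 / real N)" by (rule mult) auto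
    also have "\<dots> = ennreal (real m * P / real N)" using inv[OF that] P
      by (simp add: ennreal_of_nat_eq_real_of_nat ennreal_mult[symmetric])
    finally show ?thesis .
  qed
  have lin: "\<psi> t = ennreal (t * P)" if t: "0 \<le> t" for t
  proof -
    have "t \<le> real (nat \<lceil>t\<rceil>)"
      using t le_of_int_ceiling[of t] by (simp add: of_nat_nat)
    then have "\<psi> t \<le> \<psi> (real (nat \<lceil>t\<rceil>) / real (1::nat))" by (intro mono) auto
    also have "\<dots> < \<infinity>" by (subst mN) auto
    finally obtain r where r: "\<psi> t = ennreal r" "0 \<le> r"
      by (cases "\<psi> t" rule: ennreal_cases) auto
    have bnd: "\<bar>r - t * P\<bar> \<le> P / real N" if N: "N > 0" for N :: nat
    proof -
      define m where "m = nat \<lfloor>real N * t\<rfloor>"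
      have m1: "real m \<le> real N * t" using t N unfolding m_def by simp
      have m2: "real N * t < real m + 1" using t N unfolding m_def by linarith
      have "\<psi> (real m / real N) \<le> \<psi> t" using m1 N by (intro mono) (simp add: field_simps)
      then have r1: "real m * P / real N \<le> r" using mN[OF N, of m] r P
        by (auto simp: ennreal_le_iff2)
      have "\<psi> t \<le> \<psi> (real (m + 1) / real N)" using m2 N by (intro mono) (simp add: field_simps)
      then have r2: "r \<le> real (m + 1) * P / real N" using mN[OF N, of "m+1"] r P
        by (auto simp: ennreal_le_iff2 simp del: of_nat_Suc)
      have tP: "t * P = (real N * t) * P / real N" using N by simp
      have t1: "real m * P / real N \<le> t * P" unfolding tP
        using mult_right_mono[OF m1 P(2)] N by (intro divide_right_mono) (auto simp: add.commute)
      have t2: "t * P \<le> real (m + 1) * P / real N" unfolding tP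
        using mult_right_mono[OF less_imp_le[OF m2] P(2)] N by (intro divide_right_mono) (auto simp: add.commute)
      have "real (m + 1) * P / real N = real m * P / real N + P / real N"
        by (simp add: add_divide_distrib distrib_right)
      then show ?thesis using r1 r2 t1 t2 by linarith
    qed
    have "r = t * P"
    proof (rule ccontr)
      assume ne: "r \<noteq> t * P"
      then have pos: "\<bar>r - t * P\<bar> > 0" by simp
      obtain N :: nat where N: "P / \<bar>r - t * P\<bar> < real N" using reals_Archimedean2 by blast
      have "0 \<le> P / \<bar>r - t * P\<bar>" using P by simp
      then have "0 < real N" using N by linarith
      then have "N > 0" by simp
      then have "\<bar>r - t * P\<bar> \<le> P / real N" by (rule bnd)
      moreover have "P < real N * \<bar>r - t * P\<bar>" using N pos by (simp add: field_simps)
      ultimately show False using \<open>N > 0\<close> by (simp add: field_simps)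
    qed
    then show ?thesis using r by simp
  qed
  have Ico: "emeasure \<nu> {a..<b} = ennreal ((b - a) * P)" if "a \<le> b" for a b
    using shift[OF that] lin[of "b - a"] that by (simp add: \<psi>_def)
  have pt: "emeasure \<nu> {a} = 0" for a
  proof -
    have eps: "emeasure \<nu> {a} \<le> 0 + ennreal e" if e: "0 < e" for e
    proof -
      have "emeasure \<nu> {a} \<le> emeasure \<nu> {a..<a + e / (P + 1)}"
        using e P by (intro emeasure_mono) auto
      also have "\<dots> = ennreal (e / (P + 1) * P)" using e P by (subst Ico) auto
      also have "\<dots> \<le> ennreal e"
      proof (rule ennreal_leI)
        have "e / (P + 1) * P = e * (P / (P + 1))" by simp
        also have "\<dots> \<le> e * 1" using e P by (intro mult_left_mono) auto
        finally show "e / (P + 1) * P \<le> e" by simp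
      qed
      finally show ?thesis by simp
    qed
    have "emeasure \<nu> {a} \<le> 0"
    proof (rule ennreal_le_epsilon)
      fix e :: real assume "0 < e" then show "emeasure \<nu> {a} \<le> 0 + ennreal e" by (rule eps)
    qed
    then show ?thesis by simp
  qed
  have Ioo: "emeasure \<nu> {a<..<b} = ennreal ((b - a) * P)" if "a \<le> b" for a b
  proof -
    have "{a<..<b} = {a..<b} - {a}" by auto
    moreover have "{a} \<in> null_sets \<nu>" using pt[of a] by (simp add: null_setsI)
    ultimately show ?thesis using Ico[OF that] by (simp add: emeasure_Diff_null_set)
  qed
  have "\<nu> = density lborel (\<lambda>_. ennreal P)"
  proof (rule measure_eqI_generator_eq)
    let ?E = "range (\<lambda>(a, b). box a b::real set)"
    show "Int_stable ?E"
      by (auto simp: Int_stable_def box_Int_box)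
    show "?E \<subseteq> Pow UNIV" "sets \<nu> = sigma_sets UNIV ?E" "sets (density lborel (\<lambda>_. ennreal P)) = sigma_sets UNIV ?E"
      by (simp_all add: borel_eq_box sets)
    let ?A = "\<lambda>n::nat. box (- (real n *\<^sub>R One)) (real n *\<^sub>R One) :: real set"
    show "range ?A \<subseteq> ?E" "(\<Union>i. ?A i) = UNIV"
      unfolding UN_box_eq_UNIV by auto
    show "emeasure \<nu> (?A i) \<noteq> \<infinity>" for i using Ioo[of "- real i" "real i"] by simp
    show "emeasure \<nu> X = emeasure (density lborel (\<lambda>_. ennreal P)) X" if "X \<in> ?E" for X
    proof -
      obtain a b where X: "X = {a<..<b}" using \<open>X \<in> ?E\<close> by auto
      show ?thesis
      proof (cases "a \<le> b")
        case True
        then show ?thesis unfolding X using Ioo[OF True] P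
          by (simp add: emeasure_density_const ennreal_mult[symmetric] mult.commute)
      next
        case False
        then have "X = {}" unfolding X by auto
        then show ?thesis by simp
      qed
    qed
  qed
  then show ?thesis using P by (simp add: \<psi>_def)
qed

lemma fiber_decomp:
  fixes u :: "'a::euclidean_space" and G :: "'a \<Rightarrow> real" and k :: "real \<Rightarrow> ennreal"
  assumes u: "norm u = 1" and G[measurable]: "G \<in> borel_measurable borel"
    and inv: "\<And>x t. G (x + t *\<^sub>R u) = G x"
    and fin: "(\<integral>\<^sup>+x. ennreal (G x) * indicator {0..<1} (x \<bullet> u) \<partial>lborel) < \<infinity>"
    and k[measurable]: "k \<in> borel_measurable borel"
  shows "(\<integral>\<^sup>+x. ennreal (G x) * k (x \<bullet> u) \<partial>lborel)
       = (\<integral>\<^sup>+x. ennreal (G x) * indicator {0..1} (x \<bullet> u) \<partial>lborel) * (\<integral>\<^sup>+t. k t \<partial>lborel)"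
proof -
  define \<nu> where "\<nu> = distr (density lborel (\<lambda>x. ennreal (G x))) borel (\<lambda>x. x \<bullet> u)"
  have sets_nu: "sets \<nu> = sets borel" unfolding \<nu>_def by simp
  have em: "emeasure \<nu> A = (\<integral>\<^sup>+x. ennreal (G x) * indicator A (x \<bullet> u) \<partial>lborel)" if A[measurable]: "A \<in> sets borel" for A
  proof -
    have [measurable]: "(\<lambda>x. x \<bullet> u) -` A \<in> sets borel"
      using measurable_sets[of "\<lambda>x. x \<bullet> u" borel borel A] by simp
    have "emeasure \<nu> A = emeasure (density lborel (\<lambda>x. ennreal (G x))) ((\<lambda>x. x \<bullet> u) -` A)"
      unfolding \<nu>_def by (subst emeasure_distr) auto
    also have "\<dots> = (\<integral>\<^sup>+x. ennreal (G x) * indicator ((\<lambda>x. x \<bullet> u) -` A) x \<partial>lborel)"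
      by (subst emeasure_density) auto
    also have "\<dots> = (\<integral>\<^sup>+x. ennreal (G x) * indicator A (x \<bullet> u) \<partial>lborel)"
      by (intro nn_integral_cong) (simp add: indicator_def)
    finally show ?thesis .
  qed
  define c where "c = emeasure \<nu> {0..<1}"
  have nu0: "\<nu> = density lborel (\<lambda>_. c)" unfolding c_def
  proof (rule transl_inv_measure[OF sets_nu])
    fix a b :: real assume "a \<le> b"
    have "{a..<b} = (+) a ` {0..<b-a}"
      by (auto simp: image_iff intro!: bexI[where x="_ - a"])
    then show "emeasure \<nu> {a..<b} = emeasure \<nu> {0..<b-a}"
      using slab_shift[OF u G inv, of "{0..<b-a}" a] by (simp add: em)
  next
    show "emeasure \<nu> {0..<1} < \<infinity>" using fin by (simp add: em)
  qed
  have c1: "emeasure \<nu> {0..1} = c"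
    by (subst nu0) (simp add: emeasure_density_const)
  have nu: "\<nu> = density lborel (\<lambda>_. emeasure \<nu> {0..1})"
    using nu0 c1 by simp
  have "(\<integral>\<^sup>+x. ennreal (G x) * k (x \<bullet> u) \<partial>lborel) = (\<integral>\<^sup>+t. k t \<partial>\<nu>)"
    unfolding \<nu>_def by (simp add: nn_integral_distr nn_integral_density)
  also have "\<dots> = (\<integral>\<^sup>+t. emeasure \<nu> {0..1} * k t \<partial>lborel)"
    unfolding c1 by (subst nu0) (simp add: nn_integral_density)
  also have "\<dots> = emeasure \<nu> {0..1} * (\<integral>\<^sup>+t. k t \<partial>lborel)"
    by (simp add: nn_integral_cmult)
  finally show ?thesis by (simp add: em)
qed

lemma nn_integral_h:
  fixes \<alpha> \<delta> :: real
  assumes "0 < \<alpha>" "0 \<le> \<delta>"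
  shows "(\<integral>\<^sup>+t. ennreal (1 / sqrt (t\<^sup>2 + \<alpha>\<^sup>2)) * indicator {-\<delta>..\<delta>} t \<partial>lborel) = ennreal (2 * arsinh (\<delta> / \<alpha>))"
proof -
  have "(\<integral>\<^sup>+t. ennreal (1 / sqrt (t\<^sup>2 + \<alpha>\<^sup>2)) * indicator {-\<delta>..\<delta>} t \<partial>lborel)
      = ennreal (arsinh (\<delta> / \<alpha>) - arsinh (-\<delta> / \<alpha>))"
  proof (rule nn_integral_FTC_Icc[where F="\<lambda>t. arsinh (t / \<alpha>)"])
    show "(\<lambda>t. 1 / sqrt (t\<^sup>2 + \<alpha>\<^sup>2)) \<in> borel_measurable borel" by measurable
    show "-\<delta> \<le> \<delta>" using assms by simp
    fix t :: real
    show "0 \<le> 1 / sqrt (t\<^sup>2 + \<alpha>\<^sup>2)" by simp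
    have eq: "1 / sqrt ((t / \<alpha>)\<^sup>2 + 1) * (1 / \<alpha>) = 1 / sqrt (t\<^sup>2 + \<alpha>\<^sup>2)"
    proof -
      have "sqrt ((t / \<alpha>)\<^sup>2 + 1) * \<alpha> = sqrt (((t / \<alpha>)\<^sup>2 + 1) * \<alpha>\<^sup>2)"
        using assms by (simp add: real_sqrt_mult)
      also have "((t / \<alpha>)\<^sup>2 + 1) * \<alpha>\<^sup>2 = t\<^sup>2 + \<alpha>\<^sup>2" using assms by (simp add: field_simps power2_eq_square)
      finally show ?thesis using assms by (simp add: field_simps)
    qed
    show "((\<lambda>t. arsinh (t / \<alpha>)) has_real_derivative 1 / sqrt (t\<^sup>2 + \<alpha>\<^sup>2)) (at t)"
      unfolding eq[symmetric]
      by (rule DERIV_chain2[OF arsinh_real_has_field_derivative]) (use assms in \<open>auto intro!: derivative_eq_intros\<close>)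
  qed
  then show ?thesis by simp
qed

lemma proj_facts:
  fixes u x :: "'a::euclidean_space"
  assumes u: "norm u = 1"
  shows "(x - (x \<bullet> u) *\<^sub>R u) \<bullet> u = 0"
    and "norm (x - (x \<bullet> u) *\<^sub>R u) \<le> norm x"
    and "norm x \<le> norm (x - (x \<bullet> u) *\<^sub>R u) + \<bar>x \<bullet> u\<bar>"
    and "dist x (x - (x \<bullet> u) *\<^sub>R u) = \<bar>x \<bullet> u\<bar>"
    and "\<And>t. (x + t *\<^sub>R u) - ((x + t *\<^sub>R u) \<bullet> u) *\<^sub>R u = x - (x \<bullet> u) *\<^sub>R u"
    and "\<And>t. (x + t *\<^sub>R u) \<bullet> u = x \<bullet> u + t"
proof -
  have uu: "u \<bullet> u = 1" using u by (simp add: norm_eq_1)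
  show p: "(x - (x \<bullet> u) *\<^sub>R u) \<bullet> u = 0" by (simp add: inner_diff_left uu)
  have "(norm x)\<^sup>2 = (norm (x - (x \<bullet> u) *\<^sub>R u))\<^sup>2 + (x \<bullet> u)\<^sup>2"
    unfolding power2_norm_eq_inner
    by (simp add: inner_diff_left inner_diff_right uu algebra_simps power2_eq_square inner_commute)
  then show "norm (x - (x \<bullet> u) *\<^sub>R u) \<le> norm x"
    by (metis le_add_same_cancel1 norm_ge_zero power2_le_imp_le zero_le_power2)
  show "norm x \<le> norm (x - (x \<bullet> u) *\<^sub>R u) + \<bar>x \<bullet> u\<bar>"
    using norm_triangle_ineq[of "x - (x \<bullet> u) *\<^sub>R u" "(x \<bullet> u) *\<^sub>R u"] u by simp
  show "dist x (x - (x \<bullet> u) *\<^sub>R u) = \<bar>x \<bullet> u\<bar>" using u by (simp add: dist_norm)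
  fix t
  show "(x + t *\<^sub>R u) \<bullet> u = x \<bullet> u + t" by (simp add: inner_add_left uu)
  then show "(x + t *\<^sub>R u) - ((x + t *\<^sub>R u) \<bullet> u) *\<^sub>R u = x - (x \<bullet> u) *\<^sub>R u"
    by (simp add: algebra_simps)
qed

lemma nn_fin_integral:
  fixes F :: "'a \<Rightarrow> real"
  assumes [measurable]: "F \<in> borel_measurable M" and nn: "\<And>x. 0 \<le> F x"
    and fin: "(\<integral>\<^sup>+x. ennreal (F x) \<partial>M) < \<infinity>"
  shows "integrable M F" "(\<integral>\<^sup>+x. ennreal (F x) \<partial>M) = ennreal (integral\<^sup>L M F)"
proof -
  have "integral\<^sup>L M F = enn2real (\<integral>\<^sup>+x. ennreal (F x) \<partial>M)"
    using nn by (intro integral_eq_nn_integral) auto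
  then show eq: "(\<integral>\<^sup>+x. ennreal (F x) \<partial>M) = ennreal (integral\<^sup>L M F)"
    using fin by simp
  show "integrable M F"
    using nn eq by (intro integrableI_nn_integral_finite[where x="integral\<^sup>L M F"]) auto
qed

lemma ennreal_mult_ind: "ennreal (a * indicator A x) = ennreal a * indicator A x"
  by (simp add: indicator_def)

lemma main_estimate:
  fixes f :: "'a::euclidean_space \<Rightarrow> real" and u :: 'a
  assumes f_meas[measurable]: "f \<in> borel_measurable borel" and f_nn: "\<And>x. 0 \<le> f x"
    and f_int: "integrable lborel f" and f_one: "integral\<^sup>L lborel f = 1"
    and f_bd: "\<And>x. f x \<le> M" and supp: "\<And>x. f x \<noteq> 0 \<Longrightarrow> norm x \<le> R"
    and u: "norm u = 1" and \<alpha>: "0 < \<alpha>" and \<delta>: "0 < \<delta>" and \<epsilon>: "0 \<le> \<epsilon>"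
    and ucont: "\<And>x y. dist x y \<le> \<delta> \<Longrightarrow> \<bar>f x - f y\<bar> \<le> \<epsilon>"
  defines "rI \<equiv> \<integral>x. f (x - (x \<bullet> u) *\<^sub>R u) * indicator {0..1} (x \<bullet> u) \<partial>lborel"
    and "rA \<equiv> \<integral>x. f x / sqrt ((x \<bullet> u)\<^sup>2 + \<alpha>\<^sup>2) \<partial>lborel"
    and "C \<equiv> measure lborel (cball (0::'a) (R + 1))"
  shows "\<bar>rA - 2 * arsinh (\<delta> / \<alpha>) * rI\<bar> \<le> 1 / \<delta> + \<epsilon> * C * (2 * arsinh (\<delta> / \<alpha>))"
    and "0 \<le> rI" and "rI \<le> M * C"
proof -
  define P where "P x = x - (x \<bullet> u) *\<^sub>R u" for x
  define g where "g x = f (P x)" for x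
  define cyl :: "'a \<Rightarrow> real" where "cyl x = indicator {x. norm (P x) \<le> R} x" for x
  define h where "h t = 1 / sqrt (t\<^sup>2 + \<alpha>\<^sup>2)" for t
  define as where "as = 2 * arsinh (\<delta> / \<alpha>)"
  have M0: "0 \<le> M" using f_nn[of 0] f_bd[of 0] by linarith
  have [measurable]: "P \<in> borel_measurable borel" unfolding P_def by measurable
  have [measurable]: "g \<in> borel_measurable borel" unfolding g_def by measurable
  have [measurable]: "cyl \<in> borel_measurable borel" unfolding cyl_def by measurable
  have [measurable]: "h \<in> borel_measurable borel" unfolding h_def by measurable
  have Pinv: "P (x + t *\<^sub>R u) = P x" for x t unfolding P_def using proj_facts(5)[OF u] by simp
  have ginv: "g (x + t *\<^sub>R u) = g x" for x t unfolding g_def Pinv ..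
  have cinv: "cyl (x + t *\<^sub>R u) = cyl x" for x t unfolding cyl_def by (simp add: Pinv indicator_def)
  have g_nn: "0 \<le> g x" for x unfolding g_def by (rule f_nn)
  have c_nn: "0 \<le> cyl x" for x unfolding cyl_def by simp
  have h_nn: "0 \<le> h t" for t unfolding h_def by simp
  have h_le: "h t \<le> 1 / \<alpha>" for t
  proof -
    have "\<alpha> \<le> sqrt (t\<^sup>2 + \<alpha>\<^sup>2)" using \<alpha> by (intro real_le_rsqrt) auto
    moreover have "0 < sqrt (t\<^sup>2 + \<alpha>\<^sup>2)" using \<alpha> by (intro real_sqrt_gt_zero add_nonneg_pos) auto
    ultimately show ?thesis unfolding h_def using \<alpha> by (intro divide_left_mono) auto
  qed
  have h_le2: "h t \<le> 1 / \<delta>" if "\<delta> < \<bar>t\<bar>" for t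
  proof -
    have "\<bar>t\<bar> \<le> sqrt (t\<^sup>2 + \<alpha>\<^sup>2)" by (intro real_le_rsqrt) auto
    then have "\<delta> \<le> sqrt (t\<^sup>2 + \<alpha>\<^sup>2)" using that by linarith
    moreover have "0 < sqrt (t\<^sup>2 + \<alpha>\<^sup>2)" using \<alpha> by (intro real_sqrt_gt_zero add_nonneg_pos) auto
    ultimately show ?thesis unfolding h_def using \<delta> by (intro divide_left_mono) auto
  qed
  have g_le: "g x \<le> M * cyl x" for x
  proof (cases "norm (P x) \<le> R")
    case True then show ?thesis unfolding g_def cyl_def using f_bd by simp
  next
    case False then have "f (P x) = 0" using supp by force
    then show ?thesis unfolding g_def cyl_def using False by simp
  qed
  have cyl_ball: "cyl x * indicator {0..1} (x \<bullet> u) \<le> indicator (cball 0 (R + 1)) x" for x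
  proof (cases "norm (P x) \<le> R \<and> 0 \<le> x \<bullet> u \<and> x \<bullet> u \<le> 1")
    case True
    then have "norm x \<le> R + 1" using proj_facts(3)[OF u, of x] unfolding P_def by linarith
    then show ?thesis using True unfolding cyl_def by (simp add: indicator_def)
  next
    case False then show ?thesis unfolding cyl_def by (auto simp: indicator_def)
  qed
  have C_fin: "emeasure lborel (cball (0::'a) (R + 1)) = ennreal C"
    unfolding C_def using emeasure_lborel_cball_finite[of "0::'a" "R + 1"]
    by (intro emeasure_eq_ennreal_measure) simp
  have cyl01: "(\<integral>\<^sup>+x. ennreal (cyl x * indicator {0..1} (x \<bullet> u)) \<partial>lborel) \<le> ennreal C"
  proof -
    have "(\<integral>\<^sup>+x. ennreal (cyl x * indicator {0..1} (x \<bullet> u)) \<partial>lborel)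
        \<le> (\<integral>\<^sup>+x. indicator (cball (0::'a) (R + 1)) x \<partial>lborel)"
    proof (intro nn_integral_mono)
      fix x show "ennreal (cyl x * indicator {0..1} (x \<bullet> u)) \<le> indicator (cball (0::'a) (R + 1)) x"
        using ennreal_leI[OF cyl_ball[of x]] unfolding ennreal_indicator .
    qed
    also have "\<dots> = ennreal C" using C_fin by simp
    finally show ?thesis .
  qed
  have cyl01': "(\<integral>\<^sup>+x. ennreal (cyl x) * indicator {0..<1} (x \<bullet> u) \<partial>lborel) < \<infinity>"
  proof -
    have "(\<integral>\<^sup>+x. ennreal (cyl x) * indicator {0..<1} (x \<bullet> u) \<partial>lborel)
       \<le> (\<integral>\<^sup>+x. ennreal (cyl x * indicator {0..1} (x \<bullet> u)) \<partial>lborel)"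
      by (intro nn_integral_mono) (auto simp: indicator_def)
    also have "\<dots> < \<infinity>" using cyl01 by (simp add: le_less_trans)
    finally show ?thesis .
  qed
  have g01': "(\<integral>\<^sup>+x. ennreal (g x) * indicator {0..<1} (x \<bullet> u) \<partial>lborel) < \<infinity>"
  proof -
    have "(\<integral>\<^sup>+x. ennreal (g x) * indicator {0..<1} (x \<bullet> u) \<partial>lborel)
       \<le> (\<integral>\<^sup>+x. ennreal M * (ennreal (cyl x) * indicator {0..<1} (x \<bullet> u)) \<partial>lborel)"
      using g_le M0 c_nn by (intro nn_integral_mono) (auto simp: indicator_def ennreal_mult[symmetric] ennreal_leI)
    also have "\<dots> = ennreal M * (\<integral>\<^sup>+x. ennreal (cyl x) * indicator {0..<1} (x \<bullet> u) \<partial>lborel)"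
      by (simp add: nn_integral_cmult)
    also have "\<dots> < \<infinity>" using cyl01' by (simp add: ennreal_mult_less_top)
    finally show ?thesis .
  qed
  have hI: "(\<integral>\<^sup>+t. ennreal (h t) * indicator {-\<delta>..\<delta>} t \<partial>lborel) = ennreal as"
    unfolding h_def as_def using nn_integral_h[OF \<alpha>, of \<delta>] \<delta> by simp
  define B where "B x = g x * (h (x \<bullet> u) * indicator {-\<delta>..\<delta>} (x \<bullet> u))" for x
  define Cb where "Cb x = cyl x * (h (x \<bullet> u) * indicator {-\<delta>..\<delta>} (x \<bullet> u))" for x
  have [measurable]: "B \<in> borel_measurable borel" "Cb \<in> borel_measurable borel"
    unfolding B_def Cb_def by measurable
  have rI_int: "integrable lborel (\<lambda>x. g x * indicator {0..1} (x \<bullet> u))"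
    and rI_eq: "(\<integral>\<^sup>+x. ennreal (g x * indicator {0..1} (x \<bullet> u)) \<partial>lborel) = ennreal rI"
  proof -
    have fin: "(\<integral>\<^sup>+x. ennreal (g x * indicator {0..1} (x \<bullet> u)) \<partial>lborel) < \<infinity>"
    proof -
      have "(\<integral>\<^sup>+x. ennreal (g x * indicator {0..1} (x \<bullet> u)) \<partial>lborel)
         \<le> (\<integral>\<^sup>+x. ennreal M * ennreal (cyl x * indicator {0..1} (x \<bullet> u)) \<partial>lborel)"
        using g_le M0 c_nn by (intro nn_integral_mono) (auto simp: indicator_def ennreal_mult[symmetric] ennreal_leI)
      also have "\<dots> = ennreal M * (\<integral>\<^sup>+x. ennreal (cyl x * indicator {0..1} (x \<bullet> u)) \<partial>lborel)"
        by (simp add: nn_integral_cmult)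
      also have "\<dots> < \<infinity>" using cyl01 by (simp add: ennreal_mult_less_top le_less_trans)
      finally show ?thesis .
    qed
    show "integrable lborel (\<lambda>x. g x * indicator {0..1} (x \<bullet> u))"
      using fin g_nn by (intro nn_fin_integral) auto
    show "(\<integral>\<^sup>+x. ennreal (g x * indicator {0..1} (x \<bullet> u)) \<partial>lborel) = ennreal rI"
      using fin g_nn nn_fin_integral(2)[of "\<lambda>x. g x * indicator {0..1} (x \<bullet> u)" lborel]
      unfolding rI_def g_def P_def by auto
  qed
  define Cc where "Cc = (\<integral>x. cyl x * indicator {0..1} (x \<bullet> u) \<partial>lborel)"
  have Cc_int: "integrable lborel (\<lambda>x. cyl x * indicator {0..1} (x \<bullet> u))"
    and Cc_eq: "(\<integral>\<^sup>+x. ennreal (cyl x * indicator {0..1} (x \<bullet> u)) \<partial>lborel) = ennreal Cc"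
    using cyl01 c_nn nn_fin_integral[of "\<lambda>x. cyl x * indicator {0..1} (x \<bullet> u)" lborel]
    unfolding Cc_def by (auto simp: le_less_trans)
  have Cc_nn: "0 \<le> Cc" unfolding Cc_def using c_nn by (intro Bochner_Integration.integral_nonneg) auto
  have C_nn: "0 \<le> C" unfolding C_def by simp
  have Cc_le: "Cc \<le> C" using cyl01 Cc_eq C_nn by (simp add: ennreal_le_iff)
  have rI_nn: "0 \<le> rI" unfolding rI_def using f_nn by (intro Bochner_Integration.integral_nonneg) auto
  have rI_le: "rI \<le> M * Cc"
  proof -
    have "rI = (\<integral>x. g x * indicator {0..1} (x \<bullet> u) \<partial>lborel)" unfolding rI_def g_def P_def ..
    also have "\<dots> \<le> (\<integral>x. M * (cyl x * indicator {0..1} (x \<bullet> u)) \<partial>lborel)"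
      using rI_int Cc_int g_le by (intro integral_mono) (auto simp: indicator_def)
    also have "\<dots> = M * Cc" unfolding Cc_def by simp
    finally show ?thesis .
  qed
  show "0 \<le> rI" by (rule rI_nn)
  show "rI \<le> M * C" using rI_le Cc_le M0 by (meson mult_left_mono order_trans)
  have B_nn: "(\<integral>\<^sup>+x. ennreal (B x) \<partial>lborel) = ennreal rI * ennreal as"
  proof -
    have "(\<integral>\<^sup>+x. ennreal (B x) \<partial>lborel) = (\<integral>\<^sup>+x. ennreal (g x) * (ennreal (h (x \<bullet> u)) * indicator {-\<delta>..\<delta>} (x \<bullet> u)) \<partial>lborel)"
      unfolding B_def using g_nn h_nn by (intro nn_integral_cong) (simp add: ennreal_mult indicator_def)
    also have "\<dots> = (\<integral>\<^sup>+x. ennreal (g x) * indicator {0..1} (x \<bullet> u) \<partial>lborel) * (\<integral>\<^sup>+t. ennreal (h t) * indicator {-\<delta>..\<delta>} t \<partial>lborel)"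
      by (rule fiber_decomp[OF u _ ginv g01']) auto
    also have "(\<integral>\<^sup>+x. ennreal (g x) * indicator {0..1} (x \<bullet> u) \<partial>lborel) = ennreal rI"
      using rI_eq by (simp add: ennreal_mult_ind)
    finally show ?thesis using hI by simp
  qed
  have Cb_nn: "(\<integral>\<^sup>+x. ennreal (Cb x) \<partial>lborel) = ennreal Cc * ennreal as"
  proof -
    have "(\<integral>\<^sup>+x. ennreal (Cb x) \<partial>lborel) = (\<integral>\<^sup>+x. ennreal (cyl x) * (ennreal (h (x \<bullet> u)) * indicator {-\<delta>..\<delta>} (x \<bullet> u)) \<partial>lborel)"
      unfolding Cb_def using c_nn h_nn by (intro nn_integral_cong) (simp add: ennreal_mult indicator_def)
    also have "\<dots> = (\<integral>\<^sup>+x. ennreal (cyl x) * indicator {0..1} (x \<bullet> u) \<partial>lborel) * (\<integral>\<^sup>+t. ennreal (h t) * indicator {-\<delta>..\<delta>} t \<partial>lborel)"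
      by (rule fiber_decomp[OF u _ cinv cyl01']) auto
    also have "(\<integral>\<^sup>+x. ennreal (cyl x) * indicator {0..1} (x \<bullet> u) \<partial>lborel) = ennreal Cc"
      using Cc_eq by (simp add: ennreal_mult_ind)
    finally show ?thesis using hI by simp
  qed
  have "0 < arsinh (\<delta> / \<alpha>)" using \<alpha> \<delta> by simp
  then have as_nn: "0 \<le> as" unfolding as_def by linarith
  have B_int: "integrable lborel B" and B_eq: "integral\<^sup>L lborel B = rI * as"
  proof -
    have B0: "0 \<le> B x" for x unfolding B_def using g_nn h_nn by simp
    have fin: "(\<integral>\<^sup>+x. ennreal (B x) \<partial>lborel) < \<infinity>" using B_nn by (simp add: ennreal_mult_less_top)
    show "integrable lborel B" using nn_fin_integral(1)[OF _ B0 fin] by simp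
    have "ennreal (integral\<^sup>L lborel B) = ennreal (rI * as)"
      using nn_fin_integral(2)[OF _ B0 fin] B_nn rI_nn as_nn by (simp add: ennreal_mult)
    then show "integral\<^sup>L lborel B = rI * as"
      using rI_nn as_nn B0 by (simp add: Bochner_Integration.integral_nonneg)
  qed
  have Cb_int: "integrable lborel Cb" and Cb_eq: "integral\<^sup>L lborel Cb = Cc * as"
  proof -
    have B0: "0 \<le> Cb x" for x unfolding Cb_def using c_nn h_nn by simp
    have fin: "(\<integral>\<^sup>+x. ennreal (Cb x) \<partial>lborel) < \<infinity>" using Cb_nn by (simp add: ennreal_mult_less_top)
    show "integrable lborel Cb" using nn_fin_integral(1)[OF _ B0 fin] by simp
    have "ennreal (integral\<^sup>L lborel Cb) = ennreal (Cc * as)"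
      using nn_fin_integral(2)[OF _ B0 fin] Cb_nn Cc_nn as_nn by (simp add: ennreal_mult)
    then show "integral\<^sup>L lborel Cb = Cc * as"
      using Cc_nn as_nn B0 by (simp add: Bochner_Integration.integral_nonneg)
  qed
  define A where "A x = f x / sqrt ((x \<bullet> u)\<^sup>2 + \<alpha>\<^sup>2)" for x
  have [measurable]: "A \<in> borel_measurable borel" unfolding A_def by measurable
  have A_h: "A x = f x * h (x \<bullet> u)" for x unfolding A_def h_def by simp
  have A_int: "integrable lborel A"
  proof (rule Bochner_Integration.integrable_bound[where f="\<lambda>x. f x / \<alpha>"])
    show "integrable lborel (\<lambda>x. f x / \<alpha>)" using f_int by simp
    show "AE x in lborel. norm (A x) \<le> norm (f x / \<alpha>)"
    proof (intro AE_I2)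
      fix x
      have "f x * h (x \<bullet> u) \<le> f x * (1 / \<alpha>)" using f_nn h_le by (intro mult_left_mono) auto
      then show "norm (A x) \<le> norm (f x / \<alpha>)" using f_nn[of x] h_nn[of "x \<bullet> u"] \<alpha> unfolding A_h by simp
    qed
  qed simp
  have pw: "\<bar>A x - B x\<bar> \<le> \<epsilon> * Cb x + f x / \<delta>" for x
  proof (cases "\<bar>x \<bullet> u\<bar> \<le> \<delta>")
    case True
    have fg: "\<bar>f x - g x\<bar> \<le> \<epsilon> * cyl x"
    proof (cases "norm (P x) \<le> R")
      case True2: True
      have "dist x (P x) \<le> \<delta>" unfolding P_def using proj_facts(4)[OF u, of x] True u by simp
      then show ?thesis using ucont True2 unfolding g_def cyl_def by simp
    next
      case False
      then have "f (P x) = 0" using supp by force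
      moreover have "f x = 0" using False proj_facts(2)[OF u, of x] supp[of x] unfolding P_def by force
      ultimately show ?thesis unfolding g_def cyl_def using \<epsilon> by simp
    qed
    have ind1: "indicator {-\<delta>..\<delta>} (x \<bullet> u) = (1::real)" using True by (auto simp: indicator_def)
    have "A x - B x = (f x - g x) * h (x \<bullet> u)" using ind1 unfolding A_h B_def by (simp add: algebra_simps)
    then have "\<bar>A x - B x\<bar> = \<bar>f x - g x\<bar> * h (x \<bullet> u)" using h_nn by (simp add: abs_mult)
    also have "\<dots> \<le> \<epsilon> * cyl x * h (x \<bullet> u)" using fg h_nn by (intro mult_right_mono) auto
    also have "\<dots> = \<epsilon> * Cb x" using ind1 unfolding Cb_def by simp
    moreover have "0 \<le> f x / \<delta>" using f_nn[of x] \<delta> by simp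
    ultimately show ?thesis by linarith
  next
    case False
    then have "indicator {-\<delta>..\<delta>} (x \<bullet> u) = (0::real)" by (auto simp: indicator_def)
    then have "A x - B x = f x * h (x \<bullet> u)" unfolding A_h B_def by simp
    moreover have "f x * h (x \<bullet> u) \<le> f x * (1 / \<delta>)" using h_le2[of "x \<bullet> u"] False f_nn by (intro mult_left_mono) auto
    moreover have "0 \<le> \<epsilon> * Cb x" unfolding Cb_def using c_nn h_nn \<epsilon> by simp
    moreover have "0 \<le> f x * h (x \<bullet> u)" using f_nn[of x] h_nn[of "x \<bullet> u"] by simp
    ultimately show ?thesis by simp
  qed
  have rA_eq: "rA = integral\<^sup>L lborel A" unfolding rA_def A_def ..
  have "\<bar>rA - as * rI\<bar> = \<bar>integral\<^sup>L lborel (\<lambda>x. A x - B x)\<bar>"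
    using A_int B_int B_eq rA_eq by (simp add: mult.commute)
  also have "\<dots> \<le> integral\<^sup>L lborel (\<lambda>x. \<bar>A x - B x\<bar>)"
    by (rule integral_abs_bound)
  also have "\<dots> \<le> integral\<^sup>L lborel (\<lambda>x. \<epsilon> * Cb x + f x / \<delta>)"
    using A_int B_int Cb_int f_int pw by (intro integral_mono) auto
  also have "\<dots> = \<epsilon> * (Cc * as) + 1 / \<delta>"
    using Cb_int f_int Cb_eq f_one by simp
  also have "\<dots> \<le> \<epsilon> * (C * as) + 1 / \<delta>"
    using Cc_le as_nn \<epsilon> by (intro add_right_mono mult_left_mono mult_right_mono) auto
  finally show "\<bar>rA - 2 * arsinh (\<delta> / \<alpha>) * rI\<bar> \<le> 1 / \<delta> + \<epsilon> * C * (2 * arsinh (\<delta> / \<alpha>))"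
    unfolding as_def by (simp add: algebra_simps)
qed

lemma ln_le_arsinh: "0 < x \<Longrightarrow> ln x \<le> arsinh (x::real)"
  unfolding arsinh_real_def by (subst ln_le_cancel_iff) (auto intro: add_pos_nonneg)

lemma arsinh_scale:
  fixes c x :: real
  assumes c: "0 < c" "c \<le> 1" and x: "0 < x"
  shows "arsinh x + ln c \<le> arsinh (c * x)" "arsinh (c * x) \<le> arsinh x"
proof -
  have p1: "0 < x + sqrt (x\<^sup>2 + 1)" using x by (intro add_pos_nonneg) auto
  have "sqrt (c\<^sup>2 * x\<^sup>2 + c\<^sup>2) = sqrt (c\<^sup>2 * (x\<^sup>2 + 1))" by (simp add: algebra_simps)
  also have "\<dots> = c * sqrt (x\<^sup>2 + 1)" using c by (simp add: real_sqrt_mult)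
  finally have "c * sqrt (x\<^sup>2 + 1) = sqrt (c\<^sup>2 * x\<^sup>2 + c\<^sup>2)" ..
  also have "\<dots> \<le> sqrt ((c * x)\<^sup>2 + 1)"
    using c by (simp add: power_mult_distrib power_le_one)
  finally have "c * (x + sqrt (x\<^sup>2 + 1)) \<le> c * x + sqrt ((c * x)\<^sup>2 + 1)"
    by (simp add: algebra_simps)
  then have "ln (c * (x + sqrt (x\<^sup>2 + 1))) \<le> ln (c * x + sqrt ((c * x)\<^sup>2 + 1))"
    using c p1 x by (subst ln_le_cancel_iff) (auto intro: add_pos_nonneg)
  then show "arsinh x + ln c \<le> arsinh (c * x)"
    unfolding arsinh_real_def using c p1 by (simp add: ln_mult)
  show "arsinh (c * x) \<le> arsinh x"
  proof -
    have "c * x \<le> x" using c x mult_left_le_one_le[of x c] by simp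
    then show ?thesis using arsinh_less_iff_real[of x "c * x"] by linarith
  qed
qed

lemma unif_conv:
  fixes f :: "'a::euclidean_space \<Rightarrow> real"
  assumes f_meas[measurable]: "f \<in> borel_measurable borel" and f_nn: "\<And>x. 0 \<le> f x"
    and f_int: "integrable lborel f" and f_one: "integral\<^sup>L lborel f = 1"
    and f_bd: "\<And>x. f x \<le> M" and supp: "\<And>x. f x \<noteq> 0 \<Longrightarrow> norm x \<le> R"
    and ucont: "\<And>e. 0 < e \<Longrightarrow> \<exists>d>0. \<forall>x y. dist x y \<le> d \<longrightarrow> \<bar>f x - f y\<bar> \<le> e"
  defines "rI \<equiv> \<lambda>u. \<integral>x. f (x - (x \<bullet> u) *\<^sub>R u) * indicator {0..1} (x \<bullet> u) \<partial>lborel"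
    and "rA \<equiv> \<lambda>\<alpha> u. \<integral>x. f x / sqrt ((x \<bullet> u)\<^sup>2 + \<alpha>\<^sup>2) \<partial>lborel"
  shows "uniform_limit (sphere 0 1) (\<lambda>\<alpha> u. rA \<alpha> u / (2 * arsinh (1 / \<alpha>))) rI (at_right 0)"
  unfolding uniform_limit_iff
proof (intro allI impI)
  fix e :: real assume e: "0 < e"
  define C where "C = measure lborel (cball (0::'a) (R + 1))"
  have C0: "0 \<le> C" unfolding C_def by simp
  have M0: "0 \<le> M" using f_nn[of 0] f_bd[of 0] by linarith
  define \<epsilon> where "\<epsilon> = e / (2 * (C + 1))"
  have \<epsilon>: "0 < \<epsilon>" unfolding \<epsilon>_def using e C0 by simp
  have \<epsilon>C: "\<epsilon> * C < e / 2"
  proof -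
    have "\<epsilon> * C = (e / 2) * (C / (C + 1))" unfolding \<epsilon>_def by (simp add: field_simps)
    also have "\<dots> < (e / 2) * 1" using e C0 by (intro mult_strict_left_mono) auto
    finally show ?thesis by simp
  qed
  obtain d where d: "d > 0" "\<And>x y. dist x y \<le> d \<Longrightarrow> \<bar>f x - f y\<bar> \<le> \<epsilon>"
    using ucont[OF \<epsilon>] by blast
  define \<delta> where "\<delta> = min d 1"
  have \<delta>: "0 < \<delta>" "\<delta> \<le> 1" using d unfolding \<delta>_def by auto
  have uc: "\<And>x y. dist x y \<le> \<delta> \<Longrightarrow> \<bar>f x - f y\<bar> \<le> \<epsilon>" using d unfolding \<delta>_def by auto
  define L where "L = - ln \<delta>"
  have L0: "0 \<le> L" unfolding L_def using \<delta> by simp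
  define X where "X = 1 / (2 * \<delta>) + L * M * C"
  have X0: "0 \<le> X" unfolding X_def using \<delta> L0 M0 C0 by simp
  define K where "K = X * 2 / e + 1"
  have K0: "0 < K" unfolding K_def using X0 e by (simp add: add_nonneg_pos)
  have XK: "X / K < e / 2"
  proof -
    have "X < K * (e / 2)" unfolding K_def using e X0 by (simp add: field_simps)
    then show ?thesis using K0 by (simp add: divide_less_eq mult.commute)
  qed
  have ev: "\<forall>\<^sub>F \<alpha> in at_right 0. 0 < \<alpha> \<and> K < arsinh (1 / \<alpha>)"
    unfolding eventually_at_right_field
  proof (intro exI[of _ "exp (- K)"] conjI allI impI)
    show "0 < exp (- K)" by simp
    fix \<alpha> :: real assume a: "0 < \<alpha>" "\<alpha> < exp (- K)"
    show "0 < \<alpha>" by fact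
    have "exp K < 1 / \<alpha>" using a by (simp add: field_simps exp_minus)
    then have "ln (exp K) < ln (1 / \<alpha>)" using a by (subst ln_less_cancel_iff) auto
    then have "K < ln (1 / \<alpha>)" by simp
    also have "\<dots> \<le> arsinh (1 / \<alpha>)" using a by (intro ln_le_arsinh) simp
    finally show "K < arsinh (1 / \<alpha>)" .
  qed
  show "\<forall>\<^sub>F \<alpha> in at_right 0. \<forall>u\<in>sphere 0 1. dist (rA \<alpha> u / (2 * arsinh (1 / \<alpha>))) (rI u) < e"
    using ev
  proof (rule eventually_mono)
    fix \<alpha> :: real assume a: "0 < \<alpha> \<and> K < arsinh (1 / \<alpha>)"
    show "\<forall>u\<in>sphere 0 1. dist (rA \<alpha> u / (2 * arsinh (1 / \<alpha>))) (rI u) < e"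
    proof
      fix u :: 'a assume "u \<in> sphere 0 1"
      then have u: "norm u = 1" by simp
      define s where "s = arsinh (1 / \<alpha>)"
      define a where "a = arsinh (\<delta> / \<alpha>)"
      have s0: "0 < s" "K < s" using a K0 unfolding s_def by auto
      have sa: "s + ln \<delta> \<le> a" "a \<le> s"
        using arsinh_scale[of \<delta> "1 / \<alpha>"] \<delta> a unfolding s_def a_def by auto
      have a0: "0 \<le> a" using \<delta> a unfolding a_def
        using arsinh_real_pos_iff[of "\<delta> / \<alpha>"] by (simp add: less_imp_le)
      note est = main_estimate[OF f_meas f_nn f_int f_one f_bd supp u conjunct1[OF a] \<delta>(1) less_imp_le[OF \<epsilon>] uc]
      have e1: "\<bar>rA \<alpha> u - 2 * a * rI u\<bar> \<le> 1 / \<delta> + \<epsilon> * C * (2 * a)"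
        using est(1) unfolding rA_def rI_def a_def C_def by simp
      have rI0: "0 \<le> rI u" and rIM: "rI u \<le> M * C"
        using est(2,3) unfolding rI_def C_def by auto
      have nn: "0 \<le> 2 * (s - a) * rI u" using sa rI0 by simp
      have "\<bar>rA \<alpha> u - 2 * s * rI u\<bar> = \<bar>(rA \<alpha> u - 2 * a * rI u) - 2 * (s - a) * rI u\<bar>"
        by (simp add: algebra_simps)
      also have "\<dots> \<le> \<bar>rA \<alpha> u - 2 * a * rI u\<bar> + \<bar>2 * (s - a) * rI u\<bar>" by (rule abs_triangle_ineq4)
      also have "\<bar>2 * (s - a) * rI u\<bar> = 2 * (s - a) * rI u" using nn by simp
      finally have "\<bar>rA \<alpha> u - 2 * s * rI u\<bar> \<le> \<bar>rA \<alpha> u - 2 * a * rI u\<bar> + 2 * (s - a) * rI u" .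
      also have "\<dots> \<le> (1 / \<delta> + \<epsilon> * C * (2 * s)) + 2 * (L * (M * C))"
      proof (rule add_mono)
        have "\<epsilon> * C * (2 * a) \<le> \<epsilon> * C * (2 * s)" using sa \<epsilon> C0 by (intro mult_left_mono) auto
        then show "\<bar>rA \<alpha> u - 2 * a * rI u\<bar> \<le> 1 / \<delta> + \<epsilon> * C * (2 * s)" using e1 by linarith
        have "s - a \<le> L" using sa unfolding L_def by simp
        then have "(s - a) * rI u \<le> L * (M * C)" using sa rI0 rIM L0 by (intro mult_mono) auto
        then show "2 * (s - a) * rI u \<le> 2 * (L * (M * C))" by (simp only: mult.assoc)
      qed
      finally have b0: "\<bar>rA \<alpha> u - 2 * s * rI u\<bar> \<le> (1 / \<delta> + \<epsilon> * C * (2 * s)) + 2 * (L * (M * C))" .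
      have X2: "2 * X = 1 / \<delta> + 2 * (L * (M * C))" unfolding X_def by (simp add: distrib_left mult.assoc)
      have ec: "\<epsilon> * C * (2 * s) = 2 * s * (\<epsilon> * C)" by (simp only: mult_ac)
      have b1: "\<bar>rA \<alpha> u - 2 * s * rI u\<bar> \<le> 2 * s * (\<epsilon> * C) + 2 * X"
        using b0 X2 ec by linarith
      have q: "rA \<alpha> u / (2 * s) - rI u = (rA \<alpha> u - 2 * s * rI u) / (2 * s)"
        using s0 by (simp add: diff_divide_distrib)
      have "dist (rA \<alpha> u / (2 * s)) (rI u) = \<bar>rA \<alpha> u - 2 * s * rI u\<bar> / (2 * s)"
        unfolding dist_real_def q abs_divide using s0 by simp
      also have "\<dots> \<le> (2 * s * (\<epsilon> * C) + 2 * X) / (2 * s)"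
        using b1 s0 by (intro divide_right_mono) auto
      also have "\<dots> = \<epsilon> * C + X / s" using s0 by (simp add: field_simps)
      also have "X / s \<le> X / K" using X0 K0 s0 by (intro divide_left_mono) auto
      then have "\<epsilon> * C + X / s < e / 2 + e / 2" using \<epsilon>C XK by linarith
      finally show "dist (rA \<alpha> u / (2 * arsinh (1 / \<alpha>))) (rI u) < e" unfolding s_def by simp
    qed
  qed
qed

lemma star_body_image:
  fixes \<rho> :: "'a::euclidean_space \<Rightarrow> real"
  shows "star_body \<rho> = insert 0 ((\<lambda>(r, u). r *\<^sub>R u) ` {(r, u). u \<in> sphere 0 1 \<and> 0 \<le> r \<and> r \<le> \<rho> u})"
proof (intro set_eqI iffI)
  fix x :: 'a assume "x \<in> star_body \<rho>"
  then have x: "x = 0 \<or> norm x \<le> \<rho> (x /\<^sub>R norm x)" by (simp add: star_body_def)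
  show "x \<in> insert 0 ((\<lambda>(r, u). r *\<^sub>R u) ` {(r, u). u \<in> sphere 0 1 \<and> 0 \<le> r \<and> r \<le> \<rho> u})"
  proof (cases "x = 0")
    case False
    then have "(norm x, x /\<^sub>R norm x) \<in> {(r, u). u \<in> sphere 0 1 \<and> 0 \<le> r \<and> r \<le> \<rho> u}"
      using x by simp
    moreover have "x = (\<lambda>(r, u). r *\<^sub>R u) (norm x, x /\<^sub>R norm x)" using False by simp
    ultimately show ?thesis by blast
  qed simp
next
  fix x :: 'a
  assume "x \<in> insert 0 ((\<lambda>(r, u). r *\<^sub>R u) ` {(r, u). u \<in> sphere 0 1 \<and> 0 \<le> r \<and> r \<le> \<rho> u})"
  then consider "x = 0" | r u where "x = r *\<^sub>R u" "norm u = 1" "0 \<le> r" "r \<le> \<rho> u" by auto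
  then show "x \<in> star_body \<rho>"
  proof cases
    case 1 then show ?thesis by (simp add: star_body_def)
  next
    case 2
    show ?thesis
    proof (cases "r = 0")
      case False
      then have "r > 0" using 2 by simp
      then have "norm x = r" "x /\<^sub>R norm x = u" using 2 by auto
      then show ?thesis using 2 by (simp add: star_body_def)
    qed (use 2 in \<open>simp add: star_body_def\<close>)
  qed
qed

lemma star_body_compact:
  fixes \<rho> :: "'a::euclidean_space \<Rightarrow> real"
  assumes cont: "continuous_on (sphere 0 1) \<rho>"
  shows "compact (star_body \<rho>)"
proof -
  let ?S = "sphere (0::'a) 1"
  define K where "K = {(r, u). u \<in> ?S \<and> 0 \<le> r \<and> r \<le> \<rho> u}"
  have "compact (\<rho> ` ?S)" by (intro compact_continuous_image cont) simp
  then have "bounded (\<rho> ` ?S)" by (rule compact_imp_bounded)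
  then obtain B0 where B0: "\<forall>y\<in>\<rho> ` ?S. norm y \<le> B0" by (auto simp: bounded_iff)
  have B: "\<rho> u \<le> B0" if "u \<in> ?S" for u using B0 that by force
  define B where "B = B0"
  define F where "F p = (fst p, \<rho> (snd p) - fst p)" for p :: "real \<times> 'a"
  have "continuous_on (UNIV \<times> ?S) F" unfolding F_def
    by (intro continuous_intros continuous_on_compose2[OF cont]) auto
  moreover have "closed {p::real\<times>real. 0 \<le> fst p \<and> 0 \<le> snd p}"
    by (intro closed_Collect_conj closed_Collect_le continuous_intros)
  ultimately have "closed ((UNIV \<times> ?S) \<inter> F -` {p. 0 \<le> fst p \<and> 0 \<le> snd p})"
    by (intro continuous_closed_preimage closed_Times) auto
  moreover have "(UNIV \<times> ?S) \<inter> F -` {p. 0 \<le> fst p \<and> 0 \<le> snd p} = K"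
    unfolding K_def F_def by auto
  ultimately have "closed K" by simp
  moreover have "bounded K"
  proof -
    have "K \<subseteq> {0..B} \<times> ?S" unfolding K_def B_def using B by force
    moreover have "bounded ({0..B} \<times> ?S)" by (intro bounded_Times) auto
    ultimately show ?thesis by (rule bounded_subset[rotated])
  qed
  ultimately have "compact K" by (simp add: compact_eq_bounded_closed)
  then have "compact ((\<lambda>(r, u). r *\<^sub>R u) ` K)"
    by (intro compact_continuous_image) (auto intro!: continuous_intros simp: case_prod_unfold)
  then show ?thesis unfolding star_body_image[of \<rho>] K_def[symmetric] by simp
qed

lemma star_body_scale:
  fixes \<rho> :: "'a::euclidean_space \<Rightarrow> real"
  assumes c: "0 < c"
  shows "star_body (\<lambda>u. c * \<rho> u) = (\<lambda>x. c *\<^sub>R x + 0) ` star_body \<rho>"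
proof (intro set_eqI iffI)
  fix x :: 'a assume x: "x \<in> star_body (\<lambda>u. c * \<rho> u)"
  have "x /\<^sub>R c \<in> star_body \<rho>"
  proof (cases "x = 0")
    case False
    have n: "norm (x /\<^sub>R c) = norm x / c" using c by (simp add: field_simps)
    have d: "(x /\<^sub>R c) /\<^sub>R norm (x /\<^sub>R c) = x /\<^sub>R norm x" using c False by (simp add: n)
    from x False have "norm x \<le> c * \<rho> (x /\<^sub>R norm x)" by (simp add: star_body_def)
    then have "norm x / c \<le> \<rho> (x /\<^sub>R norm x)" using c by (simp add: field_simps)
    moreover have e1: "\<rho> ((x /\<^sub>R c) /\<^sub>R norm (x /\<^sub>R c)) = \<rho> (x /\<^sub>R norm x)"
      using d by (rule arg_cong)
    ultimately have "norm (x /\<^sub>R c) \<le> \<rho> ((x /\<^sub>R c) /\<^sub>R norm (x /\<^sub>R c))"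
      using n by linarith
    then show ?thesis unfolding star_body_def mem_Collect_eq by blast
  qed (simp add: star_body_def)
  moreover have "x = c *\<^sub>R (x /\<^sub>R c) + 0" using c by simp
  ultimately show "x \<in> (\<lambda>x. c *\<^sub>R x + 0) ` star_body \<rho>" by blast
next
  fix x :: 'a assume "x \<in> (\<lambda>x. c *\<^sub>R x + 0) ` star_body \<rho>"
  then obtain y where y: "y \<in> star_body \<rho>" "x = c *\<^sub>R y" by auto
  show "x \<in> star_body (\<lambda>u. c * \<rho> u)"
  proof (cases "y = 0")
    case False
    have d: "x /\<^sub>R norm x = y /\<^sub>R norm y" using c False y(2) by simp
    from y False have "norm y \<le> \<rho> (y /\<^sub>R norm y)" by (simp add: star_body_def)
    moreover have "\<rho> (x /\<^sub>R norm x) = \<rho> (y /\<^sub>R norm y)" using d by (rule arg_cong)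
    moreover have "norm x = c * norm y" using c y(2) by simp
    ultimately have "norm x \<le> c * \<rho> (x /\<^sub>R norm x)" using c by simp
    then show ?thesis unfolding star_body_def mem_Collect_eq by blast
  qed (use y in \<open>simp add: star_body_def\<close>)
qed

lemma star_volume_scale:
  fixes \<rho> :: "'a::euclidean_space \<Rightarrow> real"
  assumes c: "0 < c"
  shows "star_volume (\<lambda>u. c * \<rho> u) = c ^ DIM('a) * star_volume \<rho>"
  unfolding star_volume_def star_body_scale[OF c] measure_lebesgue_affine using c by simp

lemma star_body_mono:
  assumes "\<And>u. norm u = 1 \<Longrightarrow> \<rho>1 u \<le> \<rho>2 u"
  shows "star_body \<rho>1 \<subseteq> star_body \<rho>2"
proof
  fix x :: 'a assume "x \<in> star_body \<rho>1"
  then show "x \<in> star_body \<rho>2"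
    using assms[of "x /\<^sub>R norm x"] by (cases "x = 0") (auto simp: star_body_def)
qed

lemma star_volume_conv:
  fixes \<rho> :: "'a::euclidean_space \<Rightarrow> real" and \<rho>s :: "'b \<Rightarrow> 'a \<Rightarrow> real"
  assumes ul: "uniform_limit (sphere 0 1) \<rho>s \<rho> F"
    and contn: "\<forall>\<^sub>F n in F. continuous_on (sphere 0 1) (\<rho>s n)"
    and cont: "continuous_on (sphere 0 1) \<rho>"
  shows "((\<lambda>n. star_volume (\<rho>s n)) \<longlongrightarrow> star_volume \<rho>) F"
proof -
  let ?S = "sphere (0::'a) 1"
  define m where "m = measure lebesgue (star_body \<rho>)"
  have cpt: "compact (star_body (\<lambda>u. \<rho> u + e))" for e
    by (intro star_body_compact continuous_intros cont)
  have lm: "star_body (\<lambda>u. \<rho> u + e) \<in> lmeasurable" for e by (intro lmeasurable_compact cpt)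
  have lm0: "star_body \<rho> \<in> lmeasurable" using lm[of 0] by simp
  define A where "A k = star_body (\<lambda>u. \<rho> u + 1 / (real k + 1))" for k :: nat
  define B where "B k = star_body (\<lambda>u. \<rho> u + - (1 / (real k + 1)))" for k :: nat
  have lmA: "A k \<in> lmeasurable" for k unfolding A_def by (rule lm)
  have lmB: "B k \<in> lmeasurable" for k unfolding B_def by (rule lm)
  have Alim: "(\<lambda>k. measure lebesgue (A k)) \<longlonglongrightarrow> m"
  proof -
    have "(\<lambda>k. measure lebesgue (A k)) \<longlonglongrightarrow> measure lebesgue (\<Inter>k. A k)"
    proof (rule Lim_measure_decseq)
      show "range A \<subseteq> sets lebesgue" unfolding A_def using lm by auto
      show "decseq A" unfolding A_def
        by (intro decseq_SucI star_body_mono) (auto simp: field_simps)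
      show "emeasure lebesgue (A k) \<noteq> \<infinity>" for k unfolding A_def
        using fmeasurableD2[OF lm] by simp
    qed
    moreover have "(\<Inter>k. A k) = star_body \<rho>"
    proof (intro set_eqI iffI)
      fix x :: 'a assume x: "x \<in> (\<Inter>k. A k)"
      show "x \<in> star_body \<rho>"
      proof (cases "x = 0")
        case False
        have nk: "norm x \<le> \<rho> (x /\<^sub>R norm x) + 1 / (real k + 1)" for k
          using x False unfolding A_def star_body_def by auto
        have "norm x - \<rho> (x /\<^sub>R norm x) \<le> 0"
        proof (rule ccontr)
          assume "\<not> norm x - \<rho> (x /\<^sub>R norm x) \<le> 0"
          then obtain k where "1 / real (Suc k) < norm x - \<rho> (x /\<^sub>R norm x)"
            by (meson nat_approx_posE not_le)
          then show False using nk[of k] by (simp add: add.commute)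
        qed
        then show ?thesis unfolding star_body_def by simp
      qed (simp add: star_body_def)
    next
      fix x :: 'a assume "x \<in> star_body \<rho>"
      then show "x \<in> (\<Inter>k. A k)" unfolding A_def
        using star_body_mono[of \<rho> "\<lambda>u. \<rho> u + 1 / (real _ + 1)"] by force
    qed
    ultimately show ?thesis unfolding m_def by simp
  qed
  define T where "T = (\<Union>k. B k)"
  have Blim: "(\<lambda>k. measure lebesgue (B k)) \<longlonglongrightarrow> measure lebesgue T"
  proof (unfold T_def, rule Lim_measure_incseq)
    show "range B \<subseteq> sets lebesgue" using lmB by auto
    show "incseq B" unfolding B_def
      by (intro incseq_SucI star_body_mono) (auto simp: field_simps)
    have "(\<Union>k. B k) \<subseteq> star_body \<rho>" unfolding B_def
      by (intro UN_least star_body_mono) auto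
    then have "emeasure lebesgue (\<Union>k. B k) \<le> emeasure lebesgue (star_body \<rho>)"
      by (intro emeasure_mono) (use lm0 in auto)
    moreover have "emeasure lebesgue (star_body \<rho>) \<noteq> \<infinity>" using fmeasurableD2[OF lm0] by simp
    ultimately show "emeasure lebesgue (\<Union>k. B k) \<noteq> \<infinity>"
      by (auto simp: top_unique)
  qed
  have Tsub: "T \<subseteq> star_body \<rho>" unfolding T_def B_def
    by (intro UN_least star_body_mono) auto
  have Tmeas: "T \<in> sets lebesgue" unfolding T_def using lmB by (intro sets.countable_UN) auto
  have Tm: "measure lebesgue T = m"
  proof (rule antisym)
    show "measure lebesgue T \<le> m" unfolding m_def
      using Tsub Tmeas lm0 by (rule measure_mono_fmeasurable)
    have le: "c ^ DIM('a) * m \<le> measure lebesgue T" if c: "0 < c" "c < 1" for c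
    proof -
      have sub: "star_body (\<lambda>u. c * \<rho> u) \<subseteq> T"
      proof
        fix x :: 'a assume x: "x \<in> star_body (\<lambda>u. c * \<rho> u)"
        show "x \<in> T"
        proof (cases "x = 0")
          case True
          then have "x \<in> B 0" unfolding B_def star_body_def by simp
          then show ?thesis unfolding T_def by blast
        next
          case False
          let ?r = "\<rho> (x /\<^sub>R norm x)"
          have nx: "norm x \<le> c * ?r" using x False by (simp add: star_body_def)
          then have "0 < ?r" using False c
            by (smt (verit, best) mult_nonneg_nonpos norm_le_zero_iff)
          then have "norm x < ?r" using nx c by (smt (verit) mult_less_cancel_right2)
          then obtain k :: nat where k: "1 / (real k + 1) < ?r - norm x"
            by (metis diff_gt_0_iff_gt nat_approx_posE of_nat_Suc add.commute)
          then have "x \<in> B k" unfolding B_def star_body_def by simp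
          then show ?thesis unfolding T_def by blast
        qed
      qed
      have "c ^ DIM('a) * m = measure lebesgue (star_body (\<lambda>u. c * \<rho> u))"
        unfolding m_def using star_volume_scale[OF c(1), of \<rho>] by (simp add: star_volume_def)
      also have "\<dots> \<le> measure lebesgue T"
      proof (rule measure_mono_fmeasurable[OF sub])
        have "compact (star_body (\<lambda>u. c * \<rho> u))"
          by (intro star_body_compact continuous_intros cont)
        then show "star_body (\<lambda>u. c * \<rho> u) \<in> sets lebesgue"
          using lmeasurable_compact by blast
        show "T \<in> fmeasurable lebesgue"
          using Tsub Tmeas lm0 by (intro fmeasurableI2[OF lm0 Tsub]) auto
      qed
      finally show ?thesis .
    qed
    have lim: "(\<lambda>k. (1 - inverse (real (Suc k))) ^ DIM('a) * m) \<longlonglongrightarrow> (1 - 0) ^ DIM('a) * m"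
      by (intro tendsto_intros LIMSEQ_inverse_real_of_nat)
    have ev: "\<exists>N. \<forall>k\<ge>N. (1 - inverse (real (Suc k))) ^ DIM('a) * m \<le> measure lebesgue T"
    proof (intro exI[of _ 1] allI impI le)
      fix k :: nat assume "1 \<le> k"
      then show "0 < 1 - inverse (real (Suc k))" by (simp add: field_simps)
    qed (simp add: field_simps)
    show "m \<le> measure lebesgue T"
      using LIMSEQ_le_const2[OF lim ev] by simp
  qed
  show ?thesis
  proof (rule tendstoI)
    fix e :: real assume e: "0 < e"
    have "\<forall>\<^sub>F k in sequentially. dist (measure lebesgue (A k)) m < e \<and> dist (measure lebesgue (B k)) m < e"
      using Alim Blim Tm e by (auto intro!: eventually_conj tendstoD)
    then obtain N where N: "\<And>k. N \<le> k \<Longrightarrow> dist (measure lebesgue (A k)) m < e \<and> dist (measure lebesgue (B k)) m < e"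
      unfolding eventually_sequentially by blast
    define k where "k = N"
    have k: "dist (measure lebesgue (A k)) m < e" "dist (measure lebesgue (B k)) m < e"
      using N[of N] unfolding k_def by auto
    define \<eta> where "\<eta> = 1 / (real k + 1)"
    have \<eta>: "0 < \<eta>" unfolding \<eta>_def by simp
    have "\<forall>\<^sub>F n in F. (\<forall>u\<in>?S. dist (\<rho>s n u) (\<rho> u) < \<eta>) \<and> continuous_on ?S (\<rho>s n)"
      using ul \<eta> contn by (auto simp: uniform_limit_iff intro: eventually_conj)
    then show "\<forall>\<^sub>F n in F. dist (star_volume (\<rho>s n)) (star_volume \<rho>) < e"
    proof (rule eventually_mono)
      fix n assume n: "(\<forall>u\<in>?S. dist (\<rho>s n u) (\<rho> u) < \<eta>) \<and> continuous_on ?S (\<rho>s n)"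
      have du: "\<bar>\<rho>s n u - \<rho> u\<bar> < \<eta>" if "norm u = 1" for u
        using n that by (auto simp: dist_real_def)
      have sub1: "B k \<subseteq> star_body (\<rho>s n)" unfolding B_def
      proof (intro star_body_mono)
        fix u :: 'a assume "norm u = 1"
        from du[OF this] show "\<rho> u + - (1 / (real k + 1)) \<le> \<rho>s n u" unfolding \<eta>_def by linarith
      qed
      have sub2: "star_body (\<rho>s n) \<subseteq> A k" unfolding A_def
      proof (intro star_body_mono)
        fix u :: 'a assume "norm u = 1"
        from du[OF this] show "\<rho>s n u \<le> \<rho> u + 1 / (real k + 1)" unfolding \<eta>_def by linarith
      qed
      have mn: "star_body (\<rho>s n) \<in> lmeasurable"
        using n by (intro lmeasurable_compact star_body_compact) auto
      have "measure lebesgue (B k) \<le> star_volume (\<rho>s n)" unfolding star_volume_def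
        using sub1 mn fmeasurableD[OF lmB[of k]] by (intro measure_mono_fmeasurable) auto
      moreover have "star_volume (\<rho>s n) \<le> measure lebesgue (A k)" unfolding star_volume_def
        using sub2 mn lmA by (intro measure_mono_fmeasurable) auto
      ultimately show "dist (star_volume (\<rho>s n)) (star_volume \<rho>) < e"
        using k unfolding star_volume_def m_def[symmetric] dist_real_def by linarith
    qed
  qed
qed

lemma rA_cont:
  fixes f :: "'a::euclidean_space \<Rightarrow> real"
  assumes f_meas[measurable]: "f \<in> borel_measurable borel" and f_nn: "\<And>x. 0 \<le> f x"
    and f_int: "integrable lborel f" and \<alpha>: "0 < \<alpha>"
  shows "continuous_on S (\<lambda>u. \<integral>x. f x / sqrt ((x \<bullet> u)\<^sup>2 + \<alpha>\<^sup>2) \<partial>lborel)"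
proof (rule continuous_on_sequentiallyI)
  fix v :: "nat \<Rightarrow> 'a" and a :: 'a
  assume lim: "v \<longlonglongrightarrow> a"
  have pos: "0 < sqrt (t\<^sup>2 + \<alpha>\<^sup>2)" for t using \<alpha> by (intro real_sqrt_gt_zero add_nonneg_pos) auto
  show "(\<lambda>n. \<integral>x. f x / sqrt ((x \<bullet> v n)\<^sup>2 + \<alpha>\<^sup>2) \<partial>lborel) \<longlonglongrightarrow> (\<integral>x. f x / sqrt ((x \<bullet> a)\<^sup>2 + \<alpha>\<^sup>2) \<partial>lborel)"
  proof (rule integral_dominated_convergence[where w="\<lambda>x. f x / \<alpha>"])
    show "(\<lambda>x. f x / sqrt ((x \<bullet> a)\<^sup>2 + \<alpha>\<^sup>2)) \<in> borel_measurable lborel" by measurable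
    show "(\<lambda>x. f x / sqrt ((x \<bullet> v n)\<^sup>2 + \<alpha>\<^sup>2)) \<in> borel_measurable lborel" for n by measurable
    show "integrable lborel (\<lambda>x. f x / \<alpha>)" using f_int by simp
    show "AE x in lborel. (\<lambda>n. f x / sqrt ((x \<bullet> v n)\<^sup>2 + \<alpha>\<^sup>2)) \<longlonglongrightarrow> f x / sqrt ((x \<bullet> a)\<^sup>2 + \<alpha>\<^sup>2)"
    proof (intro AE_I2)
      fix x :: 'a
      show "(\<lambda>n. f x / sqrt ((x \<bullet> v n)\<^sup>2 + \<alpha>\<^sup>2)) \<longlonglongrightarrow> f x / sqrt ((x \<bullet> a)\<^sup>2 + \<alpha>\<^sup>2)"
        using pos[of "x \<bullet> a"] by (intro tendsto_intros lim) auto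
    qed
    show "AE x in lborel. norm (f x / sqrt ((x \<bullet> v n)\<^sup>2 + \<alpha>\<^sup>2)) \<le> f x / \<alpha>" for n
    proof (intro AE_I2)
      fix x :: 'a
      have "\<alpha> \<le> sqrt ((x \<bullet> v n)\<^sup>2 + \<alpha>\<^sup>2)" using \<alpha> by (intro real_le_rsqrt) auto
      then have "f x / sqrt ((x \<bullet> v n)\<^sup>2 + \<alpha>\<^sup>2) \<le> f x / \<alpha>"
        using f_nn[of x] \<alpha> pos[of "x \<bullet> v n"] by (intro divide_left_mono) auto
      then show "norm (f x / sqrt ((x \<bullet> v n)\<^sup>2 + \<alpha>\<^sup>2)) \<le> f x / \<alpha>"
        using f_nn[of x] pos[of "x \<bullet> v n"] by simp
    qed
  qed
qed

theorem proposition4p2: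
  fixes f :: "'a::euclidean_space \<Rightarrow> real"
  assumes "f \<in> P_class"
    and "continuous_on UNIV f"
    and "compact (closure {x. f x \<noteq> 0})"
  shows "((\<lambda>\<alpha>. (2 * arsinh (1 / \<alpha>)) powr (- real DIM('a)) * star_volume (rho_I_alpha \<alpha> f))
          \<longlongrightarrow> star_volume (rho_I f)) (at_right 0)"
proof -
  let ?S = "sphere (0::'a) 1"
  have P: "f \<in> borel_measurable lebesgue" "\<And>x. 0 \<le> f x" "integrable lebesgue f"
    "integral\<^sup>L lebesgue f = 1" "bounded (range f)"
    using assms(1) unfolding P_class_def by auto
  have f_meas[measurable]: "f \<in> borel_measurable borel"
    using assms(2) by (rule borel_measurable_continuous_onI)
  have f_nn: "\<And>x. 0 \<le> f x" by (rule P(2))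
  have f_int: "integrable lborel f" using P(3) integrable_completion[of f lborel] by simp
  have f_one: "integral\<^sup>L lborel f = 1" using P(4) integral_completion[of f lborel] by simp
  obtain M where M: "\<And>x. f x \<le> M"
    using P(5) unfolding bounded_iff by (metis abs_le_D1 rangeI real_norm_def)
  obtain R0 where R0: "\<And>x. x \<in> closure {x. f x \<noteq> 0} \<Longrightarrow> norm x \<le> R0"
    using compact_imp_bounded[OF assms(3)] unfolding bounded_iff by blast
  define R where "R = max R0 0"
  have R0': "0 \<le> R" unfolding R_def by simp
  have supp: "norm x \<le> R" if "f x \<noteq> 0" for x
  proof -
    have "x \<in> {x. f x \<noteq> 0}" using that by simp
    then have "x \<in> closure {x. f x \<noteq> 0}" using closure_subset[of "{x. f x \<noteq> 0}"] by (rule subsetD[rotated])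
    then have "norm x \<le> R0" by (rule R0)
    then show ?thesis unfolding R_def by simp
  qed
  have ucont: "\<exists>d>0. \<forall>x y. dist x y \<le> d \<longrightarrow> \<bar>f x - f y\<bar> \<le> e" if e: "0 < e" for e
  proof -
    have "uniformly_continuous_on (cball 0 (R + 1)) f"
      by (intro compact_uniformly_continuous continuous_on_subset[OF assms(2)]) auto
    then obtain d' where d'0: "d' > 0" and d'1: "\<forall>x\<in>cball 0 (R + 1). \<forall>y\<in>cball 0 (R + 1). dist y x < d' \<longrightarrow> dist (f y) (f x) < e"
      using e unfolding uniformly_continuous_on_def by blast
    have d': "d' > 0" "\<And>x y. x \<in> cball 0 (R + 1) \<Longrightarrow> y \<in> cball 0 (R + 1) \<Longrightarrow> dist y x < d' \<Longrightarrow> dist (f y) (f x) < e"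
      using d'0 d'1 by auto
    define d where "d = min (d' / 2) 1"
    have "d > 0" using d' unfolding d_def by simp
    moreover have "\<bar>f x - f y\<bar> \<le> e" if xy: "dist x y \<le> d" for x y
    proof (cases "norm x \<le> R \<or> norm y \<le> R")
      case True
      have "dist x y \<le> 1" "dist x y < d'" using xy d' unfolding d_def by auto
      moreover have "norm x \<le> norm y + dist x y" "norm y \<le> norm x + dist x y"
        using norm_triangle_sub[of x y] norm_triangle_sub[of y x] by (auto simp: dist_norm norm_minus_commute)
      ultimately have "norm x \<le> R + 1" "norm y \<le> R + 1" using True by linarith+
      then have "dist (f x) (f y) < e" using d'(2)[of y x] \<open>dist x y < d'\<close> by auto
      then show ?thesis by (simp add: dist_real_def)
    next
      case False
      then have "f x = 0" "f y = 0" using supp by force+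
      then show ?thesis using e by simp
    qed
    ultimately show ?thesis by blast
  qed
  define rI where "rI = (\<lambda>u. \<integral>x. f (x - (x \<bullet> u) *\<^sub>R u) * indicator {0..1} (x \<bullet> u) \<partial>lborel)"
  define rA where "rA = (\<lambda>\<alpha> u. \<integral>x. f x / sqrt ((x \<bullet> u)\<^sup>2 + \<alpha>\<^sup>2) \<partial>lborel)"
  have ul0: "uniform_limit ?S (\<lambda>\<alpha> u. rA \<alpha> u / (2 * arsinh (1 / \<alpha>))) rI (at_right 0)"
    unfolding rA_def rI_def by (rule unif_conv[OF f_meas f_nn f_int f_one M supp ucont])
  have eqI: "rho_I f u = rI u" for u
  proof -
    have "rho_I f u = (\<integral>x. indicator {x. 0 \<le> x \<bullet> u \<and> x \<bullet> u \<le> 1} x *\<^sub>R f (x - (x \<bullet> u) *\<^sub>R u) \<partial>lebesgue)"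
      unfolding rho_I_def hyperplane_integral_def set_lebesgue_integral_def ..
    also have "\<dots> = (\<integral>x. indicator {x. 0 \<le> x \<bullet> u \<and> x \<bullet> u \<le> 1} x *\<^sub>R f (x - (x \<bullet> u) *\<^sub>R u) \<partial>lborel)"
      by (rule integral_completion) measurable
    also have "\<dots> = rI u" unfolding rI_def
      by (intro Bochner_Integration.integral_cong) (auto simp: indicator_def)
    finally show ?thesis .
  qed
  have eqA: "rho_I_alpha \<alpha> f u = rA \<alpha> u" if "u \<in> ?S" for \<alpha> u
  proof -
    have "rho_I_alpha \<alpha> f u = (\<integral>x. f x / sqrt ((x \<bullet> u)\<^sup>2 + \<alpha>\<^sup>2 * (norm u)\<^sup>2) \<partial>lborel)"
      unfolding rho_I_alpha_def by (rule integral_completion) measurable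
    then show ?thesis unfolding rA_def using that by simp
  qed
  define \<rho>s where "\<rho>s = (\<lambda>\<alpha> u. (1 / (2 * arsinh (1 / \<alpha>))) * rho_I_alpha \<alpha> f u)"
  have ul: "uniform_limit ?S \<rho>s (rho_I f) (at_right 0)"
    using ul0 unfolding \<rho>s_def
    by (subst uniform_limit_cong'[where g="\<lambda>\<alpha> u. rA \<alpha> u / (2 * arsinh (1 / \<alpha>))" and i=rI])
       (auto simp: eqA eqI)
  have contn: "\<forall>\<^sub>F \<alpha> in at_right 0. continuous_on ?S (\<rho>s \<alpha>)"
    using eventually_at_right_less[of "0::real"]
  proof (rule eventually_mono)
    fix \<alpha> :: real assume "0 < \<alpha>"
    then have "continuous_on ?S (\<lambda>u. (1 / (2 * arsinh (1 / \<alpha>))) * rA \<alpha> u)"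
      unfolding rA_def by (intro continuous_intros rA_cont[OF f_meas f_nn f_int])
    then show "continuous_on ?S (\<rho>s \<alpha>)"
      unfolding \<rho>s_def by (rule continuous_on_cong[THEN iffD1, rotated 2]) (auto simp: eqA)
  qed
  have cont: "continuous_on ?S (rho_I f)"
    by (rule uniform_limit_theorem[OF contn ul]) simp
  have lim: "((\<lambda>\<alpha>. star_volume (\<rho>s \<alpha>)) \<longlongrightarrow> star_volume (rho_I f)) (at_right 0)"
    by (rule star_volume_conv[OF ul contn cont])
  show ?thesis
  proof (rule tendsto_cong[THEN iffD1, OF _ lim])
    show "\<forall>\<^sub>F \<alpha> in at_right 0. star_volume (\<rho>s \<alpha>) =
        (2 * arsinh (1 / \<alpha>)) powr (- real DIM('a)) * star_volume (rho_I_alpha \<alpha> f)"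
      using eventually_at_right_less[of "0::real"]
    proof (rule eventually_mono)
      fix \<alpha> :: real assume a: "0 < \<alpha>"
      then have s: "0 < 2 * arsinh (1 / \<alpha>)" by simp
      have "star_volume (\<rho>s \<alpha>) = (1 / (2 * arsinh (1 / \<alpha>))) ^ DIM('a) * star_volume (rho_I_alpha \<alpha> f)"
        unfolding \<rho>s_def using s by (intro star_volume_scale) simp
      also have "(1 / (2 * arsinh (1 / \<alpha>))) ^ DIM('a) = (2 * arsinh (1 / \<alpha>)) powr (- real DIM('a))"
        using s by (simp add: powr_minus powr_realpow power_one_over field_simps)
      finally show "star_volume (\<rho>s \<alpha>) = (2 * arsinh (1 / \<alpha>)) powr (- real DIM('a)) * star_volume (rho_I_alpha \<alpha> f)" .
    qed
  qed
qed

end
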